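(* Let $(\Omega,\mathcal A,\mu,\tau)$ be an ergodic probability-preserving dynamical system and $\omega\mapsto C_\omega=\begin{pmatrix}a_\omega&b_\omega\\ c_\omega&d_\omega\end{pmatrix}\in U(2)$ a measurable map with $a_\omega\neq0$ for $\mu$-a.e. $\omega$ and $\int_\Omega\log\frac{1}{|a_\omega|}\,d\mu(\omega)<\infty$. For $z\in\mathbb T=\{z\in\mathbb C:|z|=1\}$ let $$T(\omega,z)=\frac1{a_\omega}\begin{pmatrix}\frac{\det C_\omega}{z} & c_\omega\\ -b_\omega & z\end{pmatrix},\qquad T_n(\omega,z)=T(\tau^{n-1}\omega,z)\cdots T(\tau\omega,z)T(\omega,z),$$ and let $\gamma(z)=\lim_{n\to\infty}\frac1n\int_\Omega\log\|T_n(\omega,z)\|\,d\mu(\omega)$ be the Lyapunov exponent. Then $$\int_{\mathbb T}\gamma(z)\,dz=\int_\Omega\log\frac1{|a_\omega|}\,d\mu(\omega),$$ where $dz$ denotes normalized Lebesgue (arc-length) measure on $\mathbb T$.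
   Context: $T(\omega,z)$ is the transfer matrix of the shift-coin quantum walk $W_\omega=C_\omega S$ on $\ell^2(\mathbb Z)\otimes\mathbb C^2$ with coin $C_\omega$ at site $x$ given by $C_{\tau^x\omega}$. The limit defining $\gamma$ exists by Kingman's subadditive ergodic theorem. $\|\cdot\|$ is the operator norm. *)

theory Defs
  imports "HOL-Analysis.Analysis" "HOL-Probability.Probability"
begin

definition measure_preserving_map :: "'a measure \<Rightarrow> ('a \<Rightarrow> 'a) \<Rightarrow> bool" where
  "measure_preserving_map M \<tau> \<longleftrightarrow> \<tau> \<in> M \<rightarrow>\<^sub>M M \<and> distr M M \<tau> = M"

definition ergodic_system :: "'a measure \<Rightarrow> ('a \<Rightarrow> 'a) \<Rightarrow> bool" where
  "ergodic_system M \<tau> \<longleftrightarrow> prob_space M \<and> measure_preserving_map M \<tau> \<and>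
     (\<forall>A\<in>sets M. \<tau> -` A \<inter> space M = A \<longrightarrow> measure M A = 0 \<or> measure M A = 1)"

definition cadjoint :: "complex^'n^'m \<Rightarrow> complex^'m^'n" where
  "cadjoint A = (\<chi> i j. cnj (A $ j $ i))"

definition unitary2 :: "complex^2^2 \<Rightarrow> bool" where
  "unitary2 U \<longleftrightarrow> U ** cadjoint U = mat 1 \<and> cadjoint U ** U = mat 1"

definition ca :: "complex^2^2 \<Rightarrow> complex" where "ca U = U $ 1 $ 1"
definition cb :: "complex^2^2 \<Rightarrow> complex" where "cb U = U $ 1 $ 2"
definition cc :: "complex^2^2 \<Rightarrow> complex" where "cc U = U $ 2 $ 1"
definition cd :: "complex^2^2 \<Rightarrow> complex" where "cd U = U $ 2 $ 2"

definition transfer :: "('a \<Rightarrow> complex^2^2) \<Rightarrow> 'a \<Rightarrow> complex \<Rightarrow> complex^2^2" where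
  "transfer C \<omega> z = (\<chi> i j.
     (if i = 1 then (if j = 1 then det (C \<omega>) / z else cc (C \<omega>))
      else (if j = 1 then - cb (C \<omega>) else z)) / ca (C \<omega>))"

fun transfer_n :: "('a \<Rightarrow> complex^2^2) \<Rightarrow> ('a \<Rightarrow> 'a) \<Rightarrow> nat \<Rightarrow> 'a \<Rightarrow> complex \<Rightarrow> complex^2^2" where
  "transfer_n C \<tau> 0 \<omega> z = mat 1"
| "transfer_n C \<tau> (Suc n) \<omega> z = transfer C ((\<tau> ^^ n) \<omega>) z ** transfer_n C \<tau> n \<omega> z"

definition opnorm :: "complex^2^2 \<Rightarrow> real" where
  "opnorm A = onorm (\<lambda>x. A *v x)"

definition lyapunov :: "'a measure \<Rightarrow> ('a \<Rightarrow> 'a) \<Rightarrow> ('a \<Rightarrow> complex^2^2) \<Rightarrow> complex \<Rightarrow> real" where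
  "lyapunov M \<tau> C z = lim (\<lambda>n. (1 / real n) * (\<integral>\<omega>. ln (opnorm (transfer_n C \<tau> n \<omega> z)) \<partial>M))"

end

theory Submission
  imports Defs "HOL-Complex_Analysis.Cauchy_Integral_Formula"
begin

lemma mm_entry: "(A ** B) $ i $ j = A $ i $ 1 * B $ 1 $ j + A $ i $ 2 * B $ 2 $ j"
  for A B :: "complex^2^2"
  by (simp add: matrix_matrix_mult_def sum_2)

lemma mv_entry: "(A *v x) $ i = A $ i $ 1 * x $ 1 + A $ i $ 2 * x $ 2"
  for A :: "complex^2^2"
  by (simp add: matrix_vector_mult_def sum_2)

lemma mat_eq2: "(A::'a^2^2) = B \<longleftrightarrow> A$1$1 = B$1$1 \<and> A$1$2 = B$1$2 \<and> A$2$1 = B$2$1 \<and> A$2$2 = B$2$2"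
  by (simp add: vec_eq_iff forall_2)

lemma unitary_facts:
  assumes "unitary2 U"
  defines "a \<equiv> ca U" and "b \<equiv> cb U" and "c \<equiv> cc U" and "d \<equiv> cd U" and "D \<equiv> det U"
  shows "a * cnj a + b * cnj b = 1" "c = - D * cnj b" "d = D * cnj a" "D * cnj D = 1"
proof -
  have e1: "U ** cadjoint U = mat 1" and e2: "cadjoint U ** U = mat 1"
    using assms unfolding unitary2_def by auto
  have "(U ** cadjoint U) $ 1 $ 1 = 1" "(U ** cadjoint U) $ 2 $ 2 = 1" "(U ** cadjoint U) $ 1 $ 2 = 0"
    "(cadjoint U ** U) $ 1 $ 1 = 1" "(cadjoint U ** U) $ 1 $ 2 = 0"
    using e1 e2 by (simp_all add: mat_def)
  hence h: "a * cnj a + b * cnj b = 1" "c * cnj c + d * cnj d = 1" "a * cnj c + b * cnj d = 0"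
    "cnj a * a + cnj c * c = 1" "cnj a * b + cnj c * d = 0"
    unfolding mm_entry cadjoint_def a_def b_def c_def d_def ca_def cb_def cc_def cd_def by simp_all
  have Dd: "D = a * d - b * c" unfolding D_def a_def b_def c_def d_def ca_def cb_def cc_def cd_def
    by (simp add: det_2)
  have h3': "cnj a * c + cnj b * d = 0" using arg_cong[OF h(3), of cnj] by simp
  show "a * cnj a + b * cnj b = 1" by (rule h(1))
  show c: "c = - D * cnj b" unfolding Dd using h(1) h3'
    by algebra
  have h5': "a * cnj b + c * cnj d = 0" using arg_cong[OF h(5), of cnj] by simp
  show d: "d = D * cnj a" unfolding Dd using h(1) h3' h(4)
    by algebra
  have cc': "cnj c = - cnj D * b" using arg_cong[OF c, of cnj] by simp
  have cd': "cnj d = cnj D * a" using arg_cong[OF d, of cnj] by simp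
  show "D * cnj D = 1" using h(2) h(1) c d cc' cd' by algebra
qed

definition Jm :: "complex^2^2" where "Jm = (\<chi> i j. if i = j then (if i = 1 then 1 else -1) else 0)"
definition u11 :: "complex^2^2 \<Rightarrow> bool" where "u11 M \<longleftrightarrow> cadjoint M ** Jm ** M = Jm"

lemma cadjoint_mult: "cadjoint (A ** B) = cadjoint B ** cadjoint (A::complex^2^2)" for B :: "complex^2^2"
proof -
  have "cadjoint (A ** B) $ i $ j = (cadjoint B ** cadjoint A) $ i $ j" for i j
    unfolding mm_entry by (simp add: cadjoint_def mm_entry algebra_simps)
  thus ?thesis by (simp add: vec_eq_iff)
qed

lemma u11_mult: assumes "u11 A" "u11 B" shows "u11 (A ** B)"
proof -
  have "cadjoint (A ** B) ** Jm ** (A ** B) = cadjoint B ** (cadjoint A ** Jm ** A) ** B"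
    by (simp add: cadjoint_mult matrix_mul_assoc)
  also have "\<dots> = Jm" using assms by (simp add: u11_def)
  finally show ?thesis by (simp add: u11_def)
qed

lemma u11_one: "u11 (mat 1)"
  by (simp add: u11_def mat_eq2 mm_entry cadjoint_def Jm_def mat_def)

lemma u11_entries:
  assumes "u11 M"
  shows "cmod (M$1$1) ^ 2 - cmod (M$2$1) ^ 2 = 1" "cmod (M$2$2) ^ 2 - cmod (M$1$2) ^ 2 = 1"
    "cnj (M$1$1) * M$1$2 = cnj (M$2$1) * M$2$2"
proof -
  have e: "(cadjoint M ** Jm ** M) $ 1 $ 1 = 1" "(cadjoint M ** Jm ** M) $ 2 $ 2 = -1"
     "(cadjoint M ** Jm ** M) $ 1 $ 2 = 0"
    using assms by (simp_all add: u11_def Jm_def)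
  hence e': "cnj (M$1$1) * M$1$1 - cnj (M$2$1) * M$2$1 = 1"
     "cnj (M$1$2) * M$1$2 - cnj (M$2$2) * M$2$2 = -1"
     "cnj (M$1$1) * M$1$2 - cnj (M$2$1) * M$2$2 = 0"
    by (simp_all add: mm_entry cadjoint_def Jm_def)
  have n: "complex_of_real (cmod x ^ 2) = cnj x * x" for x by (metis complex_norm_square mult.commute)
  have "complex_of_real (cmod (M$1$1) ^ 2 - cmod (M$2$1) ^ 2) = 1" using e'(1) by (simp only: of_real_diff n)
  thus "cmod (M$1$1) ^ 2 - cmod (M$2$1) ^ 2 = 1" using of_real_eq_1_iff by blast
  have "complex_of_real (cmod (M$1$2) ^ 2 - cmod (M$2$2) ^ 2) = -1" using e'(2) by (simp only: of_real_diff n)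
  hence "cmod (M$1$2) ^ 2 - cmod (M$2$2) ^ 2 = -1"
    by (metis of_real_1 of_real_eq_iff of_real_minus)
  thus "cmod (M$2$2) ^ 2 - cmod (M$1$2) ^ 2 = 1" by simp
  show "cnj (M$1$1) * M$1$2 = cnj (M$2$1) * M$2$2" using e'(3) by simp
qed

lemma u11_norms:
  assumes "u11 M"
  shows "cmod (M$1$2) = cmod (M$2$1)" "cmod (M$2$2) = cmod (M$1$1)" "cmod (M$2$1) \<le> cmod (M$1$1)"
    "1 \<le> cmod (M$1$1)"
proof -
  note e = u11_entries[OF assms]
  define p where "p = cmod (M$1$1)"
  define q where "q = cmod (M$1$2)"
  define r where "r = cmod (M$2$1)"
  define s where "s = cmod (M$2$2)"
  have pos: "p \<ge> 0" "q \<ge> 0" "r \<ge> 0" "s \<ge> 0" by (simp_all add: p_def q_def r_def s_def)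
  have e1: "p^2 - r^2 = 1" and e2: "s^2 - q^2 = 1" using e(1,2) by (simp_all add: p_def q_def r_def s_def)
  have "cmod (cnj (M$1$1) * M$1$2) = cmod (cnj (M$2$1) * M$2$2)" using e(3) by simp
  hence e3: "p * q = r * s" by (simp add: p_def q_def r_def s_def norm_mult)
  hence "(p * q)^2 = (r * s)^2" by simp
  hence "p^2 * q^2 = r^2 * s^2" by (simp add: power_mult_distrib)
  hence "(1 + r^2) * q^2 = r^2 * (1 + q^2)" using e1 e2 by (simp add: algebra_simps)
  hence "q^2 = r^2" by (simp add: algebra_simps)
  hence qr: "q = r" using pos by (simp add: power2_eq_iff_nonneg)
  thus "cmod (M$1$2) = cmod (M$2$1)" by (simp add: q_def r_def)
  have "s^2 = p^2" using e1 e2 qr by simp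
  hence "s = p" using pos by (simp add: power2_eq_iff_nonneg)
  thus "cmod (M$2$2) = cmod (M$1$1)" by (simp add: s_def p_def)
  have "r^2 \<le> p^2" using e1 by simp
  thus "cmod (M$2$1) \<le> cmod (M$1$1)" using pos by (simp add: r_def p_def power2_le_iff_abs_le)
  have "1 \<le> p^2" using e1 by (smt (verit) zero_le_power2)
  thus "1 \<le> cmod (M$1$1)" using power2_le_imp_le[of 1 p] pos by (simp add: p_def)
qed

lemma transfer_entries:
  "transfer C w z $ 1 $ 1 = det (C w) / z / ca (C w)"
  "transfer C w z $ 1 $ 2 = cc (C w) / ca (C w)"
  "transfer C w z $ 2 $ 1 = - cb (C w) / ca (C w)"
  "transfer C w z $ 2 $ 2 = z / ca (C w)"
  by (simp_all add: transfer_def)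

lemma transfer_u11:
  assumes U: "unitary2 (C w)" and a: "ca (C w) \<noteq> 0" and z: "cmod z = 1"
  shows "u11 (transfer C w z)"
proof -
  define A where "A = ca (C w)"
  define B where "B = cb (C w)"
  define D where "D = det (C w)"
  have uf: "A * cnj A + B * cnj B = 1" "cc (C w) = - D * cnj B" "D * cnj D = 1"
    using unitary_facts[OF U] by (simp_all add: A_def B_def D_def)
  have zz: "z * cnj z = 1" using z by (metis complex_norm_square mult.commute of_real_1 power_one)
  have z0: "z \<noteq> 0" using z by auto
  have a0: "A \<noteq> 0" "cnj A \<noteq> 0" using a by (simp_all add: A_def)
  have cz: "cnj z = 1 / z" using zz z0 by (simp add: field_simps)
  have cA: "cnj A * A = 1 - B * cnj B" using uf(1) by (simp add: algebra_simps)
  have cD: "cnj D * D = 1" using uf(3) by (simp add: algebra_simps)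
  have czz: "cnj z * z = 1" using zz by (simp add: algebra_simps)
  have nzA: "cnj A * A \<noteq> 0" using a0 by simp
  have ccc: "cnj (cc (C w)) = - cnj D * B" using uf(2) by simp
  have e11: "cnj (D / z / A) * (D / z / A) - cnj (- B / A) * (- B / A) = 1"
  proof -
    have "cnj (D / z / A) * (D / z / A) = (cnj D * D) / ((cnj z * z) * (cnj A * A))" by simp
    also have "\<dots> = 1 / (cnj A * A)" by (simp only: cD czz) simp
    finally have 1: "cnj (D / z / A) * (D / z / A) = 1 / (cnj A * A)" .
    have 2: "cnj (- B / A) * (- B / A) = (B * cnj B) / (cnj A * A)" by (simp add: algebra_simps)
    show ?thesis unfolding 1 2 using a0 nzA cA by (simp add: divide_simps)
  qed
  have e22: "cnj (cc (C w) / A) * (cc (C w) / A) - cnj (z / A) * (z / A) = -1"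
  proof -
    have 1: "cnj (cc (C w) / A) * (cc (C w) / A) = (cnj D * D) * (B * cnj B) / (cnj A * A)"
      by (simp add: ccc uf(2) algebra_simps)
    have 2: "cnj (z / A) * (z / A) = (cnj z * z) / (cnj A * A)" by simp
    show ?thesis unfolding 1 2 cD czz using a0 nzA cA by (simp add: divide_simps)
  qed
  have e12: "cnj (D / z / A) * (cc (C w) / A) - cnj (- B / A) * (z / A) = 0"
  proof -
    have 1: "cnj (D / z / A) * (cc (C w) / A) = - (cnj D * D) * cnj B / (cnj z * cnj A * A)"
      by (simp add: uf(2) algebra_simps)
    have 2: "cnj z = 1 / z" using czz z0 by (simp add: field_simps)
    have 3: "cnj (- B / A) * (z / A) = - cnj B * z / (cnj A * A)" by simp
    show ?thesis unfolding 1 3 cD 2 using a0 z0 by (simp add: divide_simps)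
  qed
  have e21: "cnj (cc (C w) / A) * (D / z / A) - cnj (z / A) * (- B / A) = 0"
  proof -
    have "cnj (cnj (D / z / A) * (cc (C w) / A) - cnj (- B / A) * (z / A)) = 0" using e12 by simp
    thus ?thesis by (simp add: algebra_simps)
  qed
  have "(cadjoint (transfer C w z) ** Jm ** transfer C w z) = Jm"
    unfolding mat_eq2 mm_entry
    by (simp add: cadjoint_def Jm_def transfer_entries flip: A_def B_def D_def)
       (use e11 e12 e21 e22 in \<open>simp_all add: algebra_simps\<close>)
  thus ?thesis by (simp add: u11_def)
qed

lemma transfer_n_add:
  "transfer_n C \<tau> (m + n) \<omega> z = transfer_n C \<tau> m ((\<tau> ^^ n) \<omega>) z ** transfer_n C \<tau> n \<omega> z"
proof (induction m)
  case 0 thus ?case by (simp add: matrix_mul_lid)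
next
  case (Suc m)
  have "transfer_n C \<tau> (Suc m + n) \<omega> z = transfer C ((\<tau> ^^ (m + n)) \<omega>) z ** transfer_n C \<tau> (m + n) \<omega> z"
    by simp
  also have "\<dots> = transfer C ((\<tau> ^^ m) ((\<tau> ^^ n) \<omega>)) z ** (transfer_n C \<tau> m ((\<tau> ^^ n) \<omega>) z ** transfer_n C \<tau> n \<omega> z)"
    by (simp add: Suc funpow_add)
  also have "\<dots> = transfer_n C \<tau> (Suc m) ((\<tau> ^^ n) \<omega>) z ** transfer_n C \<tau> n \<omega> z"
    by (simp add: matrix_mul_assoc)
  finally show ?case .
qed

lemma transfer_n_u11:
  assumes "\<And>k. k < n \<Longrightarrow> unitary2 (C ((\<tau> ^^ k) \<omega>)) \<and> ca (C ((\<tau> ^^ k) \<omega>)) \<noteq> 0"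
    and "cmod z = 1"
  shows "u11 (transfer_n C \<tau> n \<omega> z)"
  using assms(1)
proof (induction n)
  case 0 thus ?case by (simp add: u11_one)
next
  case (Suc n)
  thus ?case using transfer_u11[of C "(\<tau> ^^ n) \<omega>" z] assms(2) by (simp add: u11_mult)
qed

lemma opnorm_mult: "opnorm (A ** B) \<le> opnorm A * opnorm B"
proof -
  have "(\<lambda>x. (A ** B) *v x) = (\<lambda>x. A *v x) \<circ> (\<lambda>x. B *v x)"
    by (auto simp: matrix_vector_mul_assoc)
  thus ?thesis unfolding opnorm_def by (metis onorm_compose matrix_vector_mul_bounded_linear)
qed

lemma opnorm_one: "opnorm (mat 1) = 1"
proof -
  have "((*v) (mat 1)) = (\<lambda>x::complex^2. x)" by (rule ext) (simp add: matrix_vector_mul_lid)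
  thus ?thesis unfolding opnorm_def by (simp add: onorm_id)
qed

lemma opnorm_nonneg: "0 \<le> opnorm A"
  unfolding opnorm_def by (simp add: onorm_pos_le)

lemma norm_vec2_le: "norm (x::complex^2) \<le> cmod (x$1) + cmod (x$2)"
proof -
  have "norm x = L2_set (\<lambda>i. norm (x$i)) UNIV" by (simp add: norm_vec_def)
  also have "\<dots> \<le> sum (\<lambda>i. norm (x$i)) UNIV" by (rule L2_set_le_sum) simp
  finally show ?thesis by (simp add: sum_2)
qed

lemma opnorm_le_sum: "opnorm A \<le> cmod (A$1$1) + cmod (A$1$2) + cmod (A$2$1) + cmod (A$2$2)"
  unfolding opnorm_def
proof (rule onorm_le)
  fix x :: "complex^2"
  have "norm (A *v x) \<le> cmod ((A *v x)$1) + cmod ((A *v x)$2)" by (rule norm_vec2_le)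
  also have "\<dots> \<le> (cmod (A$1$1) * cmod (x$1) + cmod (A$1$2) * cmod (x$2))
      + (cmod (A$2$1) * cmod (x$1) + cmod (A$2$2) * cmod (x$2))"
    unfolding mv_entry by (intro add_mono) (metis norm_mult norm_triangle_ineq)+
  also have "\<dots> \<le> (cmod (A$1$1) * norm x + cmod (A$1$2) * norm x)
      + (cmod (A$2$1) * norm x + cmod (A$2$2) * norm x)"
    by (intro add_mono mult_left_mono Finite_Cartesian_Product.norm_nth_le norm_ge_zero)
  finally show "norm (A *v x) \<le> (cmod (A$1$1) + cmod (A$1$2) + cmod (A$2$1) + cmod (A$2$2)) * norm x"
    by (simp add: algebra_simps)
qed

lemma opnorm_ge11: "cmod (A$1$1) \<le> opnorm A"
proof -
  define e :: "complex^2" where "e = (\<chi> i. if i = 1 then 1 else 0)"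
  have ne: "norm e = 1" by (simp add: e_def norm_vec_def L2_set_def sum_2)
  have "cmod (A$1$1) = cmod ((A *v e) $ 1)" by (simp add: mv_entry e_def)
  also have "\<dots> \<le> norm (A *v e)" by (rule Finite_Cartesian_Product.norm_nth_le)
  also have "\<dots> \<le> opnorm A * norm e" unfolding opnorm_def
    by (rule onorm) simp
  finally show ?thesis using ne by simp
qed

lemma u11_opnorm:
  assumes "u11 M"
  shows "cmod (M$1$1) \<le> opnorm M" "opnorm M \<le> 4 * cmod (M$1$1)" "1 \<le> opnorm M" "1 \<le> cmod (M$1$1)"
proof -
  note n = u11_norms[OF assms]
  show "cmod (M$1$1) \<le> opnorm M" by (rule opnorm_ge11)
  show "opnorm M \<le> 4 * cmod (M$1$1)" using opnorm_le_sum[of M] n by linarith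
  show "1 \<le> opnorm M" using n opnorm_ge11[of M] by linarith
  show "1 \<le> cmod (M$1$1)" by (rule n(4))
qed

lemma opnorm_add: "opnorm (A + B) \<le> opnorm A + opnorm B"
proof -
  have "(\<lambda>x. (A + B) *v x) = (\<lambda>x. A *v x + B *v x)" by (simp add: matrix_vector_mult_add_rdistrib)
  thus ?thesis unfolding opnorm_def by (simp add: onorm_triangle)
qed

lemma entry_le_norm: "cmod (A$i$j) \<le> norm (A::complex^2^2)"
  by (meson Finite_Cartesian_Product.norm_nth_le order_trans)

lemma opnorm_lipschitz: "\<bar>opnorm A - opnorm B\<bar> \<le> 4 * norm (A - B)"
proof -
  have h: "opnorm X \<le> 4 * norm X" for X :: "complex^2^2"
    using opnorm_le_sum[of X] entry_le_norm[of X 1 1] entry_le_norm[of X 1 2]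
      entry_le_norm[of X 2 1] entry_le_norm[of X 2 2] by linarith
  have "opnorm A \<le> opnorm B + opnorm (A - B)" using opnorm_add[of B "A - B"] by simp
  moreover have "opnorm B \<le> opnorm A + opnorm (B - A)" using opnorm_add[of A "B - A"] by simp
  moreover have "norm (B - A) = norm (A - B)" by (rule norm_minus_commute)
  ultimately show ?thesis using h[of "A - B"] h[of "B - A"] by linarith
qed

lemma opnorm_continuous: "continuous_on UNIV opnorm"
  unfolding continuous_on_iff
proof (intro ballI allI impI)
  fix x :: "complex^2^2" and e :: real assume "0 < e"
  show "\<exists>d>0. \<forall>x'\<in>UNIV. dist x' x < d \<longrightarrow> dist (opnorm x') (opnorm x) < e"
  proof (intro exI[of _ "e/4"] conjI ballI impI)
    show "0 < e / 4" using \<open>0 < e\<close> by simp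
    fix y :: "complex^2^2" assume "dist y x < e/4"
    thus "dist (opnorm y) (opnorm x) < e" using opnorm_lipschitz[of y x]
      by (simp add: dist_norm dist_real_def)
  qed
qed

definition Nm :: "complex^2^2 \<Rightarrow> complex \<Rightarrow> complex^2^2" where
  "Nm U z = (\<chi> i j. if i = 1 then (if j = 1 then det U else cc U * z) else (if j = 1 then - cb U * z else z * z))"

fun vq :: "('a \<Rightarrow> complex^2^2) \<Rightarrow> ('a \<Rightarrow> 'a) \<Rightarrow> nat \<Rightarrow> 'a \<Rightarrow> complex \<Rightarrow> complex^2" where
  "vq C \<tau> 0 \<omega> z = (\<chi> i. if i = 1 then 1 else 0)"
| "vq C \<tau> (Suc n) \<omega> z = Nm (C ((\<tau> ^^ n) \<omega>)) z *v vq C \<tau> n \<omega> z"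

lemma vq_entries:
  "vq C \<tau> (Suc n) \<omega> z $ 1 = det (C ((\<tau> ^^ n) \<omega>)) * vq C \<tau> n \<omega> z $ 1 + cc (C ((\<tau> ^^ n) \<omega>)) * z * vq C \<tau> n \<omega> z $ 2"
  "vq C \<tau> (Suc n) \<omega> z $ 2 = - cb (C ((\<tau> ^^ n) \<omega>)) * z * vq C \<tau> n \<omega> z $ 1 + z * z * vq C \<tau> n \<omega> z $ 2"
  by (simp_all add: mv_entry Nm_def)

declare vq.simps(2)[simp del]

lemma vq0_entries: "vq C \<tau> 0 \<omega> z $ 1 = 1" "vq C \<tau> 0 \<omega> z $ 2 = 0"
  by simp_all

lemma transfer_n_col:
  assumes z: "z \<noteq> 0"
  shows "transfer_n C \<tau> n \<omega> z $ i $ 1 = vq C \<tau> n \<omega> z $ i / (z ^ n * (\<Prod>k<n. ca (C ((\<tau> ^^ k) \<omega>))))"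
proof (induction n arbitrary: i)
  case 0 thus ?case by (simp add: mat_def)
next
  case (Suc n)
  define a where "a = ca (C ((\<tau> ^^ n) \<omega>))"
  define P where "P = z ^ n * (\<Prod>k<n. ca (C ((\<tau> ^^ k) \<omega>)))"
  have P': "z ^ Suc n * (\<Prod>k<Suc n. ca (C ((\<tau> ^^ k) \<omega>))) = P * z * a"
    by (simp add: P_def a_def algebra_simps)
  have IH: "transfer_n C \<tau> n \<omega> z $ j $ 1 = vq C \<tau> n \<omega> z $ j / P" for j
    using Suc by (simp add: P_def)
  have "transfer_n C \<tau> (Suc n) \<omega> z $ i $ 1 =
     transfer C ((\<tau> ^^ n) \<omega>) z $ i $ 1 * (vq C \<tau> n \<omega> z $ 1 / P) + transfer C ((\<tau> ^^ n) \<omega>) z $ i $ 2 * (vq C \<tau> n \<omega> z $ 2 / P)"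
    by (simp add: mm_entry IH)
  also have "\<dots> = vq C \<tau> (Suc n) \<omega> z $ i / (P * z * a)"
  proof (cases "a = 0 \<or> P = 0")
    case True thus ?thesis
      by (cases "i = 1") (auto simp: transfer_def a_def)
  next
    case False
    then have "a \<noteq> 0" "P \<noteq> 0" by auto
    show ?thesis
    proof (cases "i = 1")
      case True thus ?thesis using \<open>a \<noteq> 0\<close> \<open>P \<noteq> 0\<close> z
        by (simp add: transfer_def vq_entries(1) flip: a_def) (simp add: field_simps)
    next
      case False hence "i = 2" using exhaust_2 by blast
      thus ?thesis using \<open>a \<noteq> 0\<close> \<open>P \<noteq> 0\<close> z
        by (simp add: transfer_def vq_entries(2) flip: a_def) (simp add: field_simps)
    qed
  qed
  finally have "transfer_n C \<tau> (Suc n) \<omega> z $ i $ 1 = vq C \<tau> (Suc n) \<omega> z $ i / (P * z * a)" .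
  thus ?case by (simp only: P')
qed

lemma cmod_diff_sq: "cmod (u - w) ^ 2 = cmod u ^ 2 - 2 * Re (u * cnj w) + cmod w ^ 2"
  unfolding cmod_power2 by (simp add: power2_diff algebra_simps)

lemma cone_real:
  fixes X Y r \<beta> R :: real
  assumes "0 \<le> Y" "Y < X" "0 \<le> r" "r \<le> 1" "0 \<le> \<beta>" "\<beta>^2 < 1" "R \<le> \<beta> * r * X * Y"
  shows "r^2 * (\<beta>^2 * X^2 - 2 * R + r^2 * Y^2) < X^2 - 2 * R + \<beta>^2 * r^2 * Y^2"
proof -
  have "(1 - r^2) * R \<le> (1 - r^2) * (\<beta> * r * X * Y)"
    using assms by (intro mult_left_mono) (auto simp: power_le_one)
  hence "X^2 - 2 * R + \<beta>^2 * r^2 * Y^2 - r^2 * (\<beta>^2 * X^2 - 2 * R + r^2 * Y^2)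
      \<ge> (1 - r^2) * (X - \<beta> * r * Y)^2 + r^2 * (1 - \<beta>^2) * (X^2 - r^2 * Y^2)"
    by (simp add: algebra_simps power2_eq_square)
  moreover have "(1 - r^2) * (X - \<beta> * r * Y)^2 + r^2 * (1 - \<beta>^2) * (X^2 - r^2 * Y^2) > 0"
  proof (cases "r = 0")
    case True thus ?thesis using assms by simp
  next
    case False
    have "r^2 * Y^2 \<le> Y^2" using assms by (simp add: mult_left_le_one_le power_le_one)
    moreover have "Y^2 < X^2" using assms by (simp add: power_strict_mono)
    ultimately have "X^2 - r^2 * Y^2 > 0" by linarith
    moreover have "r^2 * (1 - \<beta>^2) > 0" using False assms by simp
    ultimately have "r^2 * (1 - \<beta>^2) * (X^2 - r^2 * Y^2) > 0" by simp
    moreover have "(1 - r^2) * (X - \<beta> * r * Y)^2 \<ge> 0" using assms by (simp add: power_le_one)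
    ultimately show ?thesis by linarith
  qed
  ultimately show ?thesis by linarith
qed

lemma cone_step:
  assumes U: "unitary2 U" and a: "ca U \<noteq> 0" and z: "cmod z \<le> 1"
    and v: "cmod (v$2) < cmod (v$1)"
  shows "cmod ((Nm U z *v v)$2) < cmod ((Nm U z *v v)$1)"
proof -
  define x where "x = v$1"
  define y where "y = v$2"
  define b where "b = cb U"
  define D where "D = det U"
  note uf = unitary_facts[OF U]
  have cD: "cmod D = 1"
  proof -
    have "complex_of_real (cmod D ^ 2) = 1" using uf(4) complex_norm_square[of D] by (simp only: D_def)
    hence "cmod D ^ 2 = 1" using of_real_eq_1_iff by blast
    thus ?thesis using norm_ge_zero[of D] by (auto simp: power2_eq_1_iff)
  qed
  have e1: "(Nm U z *v v)$1 = D * (x - cnj b * z * y)"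
    by (simp add: mv_entry Nm_def uf(2) x_def y_def b_def D_def algebra_simps)
  have e2: "(Nm U z *v v)$2 = - z * (b * x - z * y)"
    by (simp add: mv_entry Nm_def x_def y_def b_def algebra_simps)
  define R where "R = Re (x * b * cnj z * cnj y)"
  have n1: "cmod (x - cnj b * z * y) ^ 2 = cmod x ^ 2 - 2 * R + cmod b ^ 2 * cmod z ^ 2 * cmod y ^ 2"
    unfolding cmod_diff_sq R_def by (simp add: norm_mult power_mult_distrib algebra_simps)
  have n2: "cmod (b * x - z * y) ^ 2 = cmod b ^ 2 * cmod x ^ 2 - 2 * R + cmod z ^ 2 * cmod y ^ 2"
    unfolding cmod_diff_sq R_def by (simp add: norm_mult power_mult_distrib algebra_simps)
  have "R \<le> cmod (x * b * cnj z * cnj y)" unfolding R_def by (rule complex_Re_le_cmod)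
  hence Rb: "R \<le> cmod b * cmod z * cmod x * cmod y" by (simp add: norm_mult algebra_simps)
  have "cmod (ca U) ^ 2 + cmod b ^ 2 = 1"
  proof -
    have "complex_of_real (cmod (ca U) ^ 2 + cmod b ^ 2) = 1" using uf(1)
      complex_norm_square[of "ca U"] complex_norm_square[of "cb U"] unfolding of_real_add by (simp add: b_def)
    thus ?thesis using of_real_eq_1_iff by blast
  qed
  hence b1: "cmod b ^ 2 < 1" using a by (smt (verit) zero_less_norm_iff zero_less_power)
  have "cmod z ^ 2 * (cmod b ^ 2 * cmod x ^ 2 - 2 * R + cmod z ^ 2 * cmod y ^ 2)
     < cmod x ^ 2 - 2 * R + cmod b ^ 2 * cmod z ^ 2 * cmod y ^ 2"
    by (rule cone_real) (use v z b1 Rb in \<open>simp_all add: x_def y_def\<close>)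
  hence "(cmod z * cmod (b * x - z * y)) ^ 2 < cmod (x - cnj b * z * y) ^ 2"
    unfolding power_mult_distrib n1 n2 by (simp add: algebra_simps)
  hence "cmod z * cmod (b * x - z * y) < cmod (x - cnj b * z * y)"
    by (rule power_less_imp_less_base) simp
  thus ?thesis unfolding e1 e2 by (simp add: norm_mult cD)
qed

definition good_upto :: "('a \<Rightarrow> complex^2^2) \<Rightarrow> ('a \<Rightarrow> 'a) \<Rightarrow> nat \<Rightarrow> 'a \<Rightarrow> bool" where
  "good_upto C \<tau> n \<omega> \<longleftrightarrow> (\<forall>k<n. unitary2 (C ((\<tau> ^^ k) \<omega>)) \<and> ca (C ((\<tau> ^^ k) \<omega>)) \<noteq> 0)"

lemma vq_cone:
  assumes "good_upto C \<tau> n \<omega>" "cmod z \<le> 1"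
  shows "cmod (vq C \<tau> n \<omega> z $ 2) < cmod (vq C \<tau> n \<omega> z $ 1)"
  using assms(1)
proof (induction n)
  case 0 thus ?case by simp
next
  case (Suc n)
  hence "good_upto C \<tau> n \<omega>" by (simp add: good_upto_def)
  with Suc show ?case using cone_step[OF _ _ assms(2)] by (simp add: good_upto_def vq.simps(2))
qed

lemma vq_nonzero:
  assumes "good_upto C \<tau> n \<omega>" "cmod z \<le> 1"
  shows "vq C \<tau> n \<omega> z $ 1 \<noteq> 0"
  using vq_cone[OF assms] by (metis norm_ge_zero norm_zero not_less)

lemma vq_at0:
  assumes "good_upto C \<tau> n \<omega>"
  shows "cmod (vq C \<tau> n \<omega> 0 $ 1) = 1 \<and> vq C \<tau> n \<omega> 0 $ 2 = 0"
  using assms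
proof (induction n)
  case 0 thus ?case by simp
next
  case (Suc n)
  hence IH: "cmod (vq C \<tau> n \<omega> 0 $ 1) = 1 \<and> vq C \<tau> n \<omega> 0 $ 2 = 0" by (simp add: good_upto_def)
  have U: "unitary2 (C ((\<tau> ^^ n) \<omega>))" using Suc.prems by (simp add: good_upto_def)
  have "complex_of_real (cmod (det (C ((\<tau> ^^ n) \<omega>))) ^ 2) = 1"
    using unitary_facts(4)[OF U] complex_norm_square[of "det (C ((\<tau> ^^ n) \<omega>))"] by simp
  hence "cmod (det (C ((\<tau> ^^ n) \<omega>))) ^ 2 = 1" using of_real_eq_1_iff by blast
  hence "cmod (det (C ((\<tau> ^^ n) \<omega>))) = 1" using norm_ge_zero[of "det (C ((\<tau> ^^ n) \<omega>))"] by (auto simp: power2_eq_1_iff)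
  thus ?case using IH by (simp add: vq_entries norm_mult)
qed

lemma vq_holo: "(\<lambda>z. vq C \<tau> n \<omega> z $ i) holomorphic_on UNIV"
proof (induction n arbitrary: i)
  case 0 thus ?case by simp
next
  case (Suc n)
  have "i = 1 \<or> i = 2" using exhaust_2 by blast
  thus ?case using Suc
    by (auto simp: vq_entries intro!: holomorphic_intros)
qed

lemma zero_free_radius:
  fixes f :: "complex \<Rightarrow> complex"
  assumes cont: "continuous_on UNIV f" and nz: "\<And>z. cmod z \<le> 1 \<Longrightarrow> f z \<noteq> 0"
  obtains R where "R > 1" "\<And>z. cmod z < R \<Longrightarrow> f z \<noteq> 0"
proof -
  define Z where "Z = cball 0 2 \<inter> f -` {0}"
  have "closed (f -` {0})" using cont by (intro continuous_closed_vimage) (auto simp: continuous_on_eq_continuous_at)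
  hence cZ: "compact Z" unfolding Z_def by (intro compact_Int_closed) auto
  show ?thesis
  proof (cases "Z = {}")
    case True
    show ?thesis
    proof (rule that[of 2])
      fix z :: complex assume "cmod z < 2"
      hence "z \<in> cball 0 2" by (simp add: dist_norm)
      thus "f z \<noteq> 0" using True by (auto simp: Z_def)
    qed simp
  next
    case False
    obtain z0 where z0: "z0 \<in> Z" "\<And>y. y \<in> Z \<Longrightarrow> norm z0 \<le> norm y"
      using continuous_attains_inf[OF cZ False, of norm] by (auto intro: continuous_intros)
    have "cmod z0 > 1" using z0(1) nz unfolding Z_def by (meson IntD2 not_le singletonD vimageE)
    moreover have "cmod z0 \<le> 2" using z0(1) by (auto simp: Z_def)
    ultimately show ?thesis
    proof (intro that[of "cmod z0"])
      fix z :: complex assume "cmod z < cmod z0" "cmod z0 \<le> 2"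
      thus "f z \<noteq> 0" using z0(2)[of z] by (force simp: Z_def)
    qed auto
  qed
qed

lemma mean_log:
  fixes f :: "complex \<Rightarrow> complex"
  assumes hol: "f holomorphic_on UNIV" and nz: "\<And>z. cmod z \<le> 1 \<Longrightarrow> f z \<noteq> 0"
  shows "set_integrable lborel {0..2*pi} (\<lambda>t. ln (cmod (f (cis t))))"
    "(LINT t:{0..2*pi}|lborel. ln (cmod (f (cis t)))) = 2 * pi * ln (cmod (f 0))"
proof -
  have contf: "continuous_on UNIV f" using hol holomorphic_on_imp_continuous_on by blast
  obtain R where R: "R > 1" "\<And>z. cmod z < R \<Longrightarrow> f z \<noteq> 0"
    using zero_free_radius[OF contf nz] by blast
  obtain g where g: "g holomorphic_on ball 0 R" "\<And>x. x \<in> ball 0 R \<Longrightarrow> exp (g x) = f x"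
    using holomorphic_logarithm_exists[of "ball 0 R" f 0] R hol
    by (auto intro: holomorphic_on_subset)
  have gRe: "Re (g x) = ln (cmod (f x))" if "x \<in> ball 0 R" for x
    using g(2)[OF that] by (metis norm_exp_eq_Re ln_exp)
  have "g holomorphic_on cball 0 1" by (rule holomorphic_on_subset[OF g(1)]) (use R(1) in \<open>auto simp: dist_norm\<close>)
  hence ci: "((\<lambda>u. g u / (u - 0)) has_contour_integral (2 * of_real pi * \<i> * g 0)) (circlepath 0 1)"
    by (rule Cauchy_integral_circlepath_simple) simp
  define E where "E = (\<lambda>x::real. exp (2 * of_real pi * \<i> * of_real x))"
  have Ecis: "E x = cis (2 * pi * x)" for x by (simp add: E_def cis_conv_exp mult_ac)
  have Enorm: "cmod (E x) = 1" for x by (simp add: Ecis)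
  have "((\<lambda>x. g (circlepath 0 1 x) / (circlepath 0 1 x - 0) * vector_derivative (circlepath 0 1) (at x within {0..1}))
      has_integral (2 * of_real pi * \<i> * g 0)) {0..1}"
    using ci unfolding has_contour_integral_def .
  hence "((\<lambda>x. (2 * of_real pi * \<i>) * g (E x)) has_integral (2 * of_real pi * \<i> * g 0)) {0..1}"
  proof (rule has_integral_eq[rotated])
    fix x :: real assume "x \<in> {0..1}"
    hence "vector_derivative (circlepath 0 1) (at x within {0..1}) = 2 * pi * \<i> * E x"
      using vector_derivative_circlepath01[of x 0 1] by (simp add: E_def)
    moreover have "circlepath 0 1 x = E x" by (simp add: circlepath E_def)
    moreover have "E x \<noteq> 0" by (simp add: E_def)
    ultimately show "g (circlepath 0 1 x) / (circlepath 0 1 x - 0) * vector_derivative (circlepath 0 1) (at x within {0..1})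
        = (2 * of_real pi * \<i>) * g (E x)" by simp
  qed
  hence "((\<lambda>x. g (E x)) has_integral g 0) {0..1}"
    by (subst (asm) has_integral_mult_right_iff) auto
  from has_integral_linear[OF this bounded_linear_Re]
  have "((\<lambda>x. Re (g (E x))) has_integral Re (g 0)) {0..1}" by (simp add: o_def)
  moreover have "Re (g (E x)) = ln (cmod (f (cis (2 * pi * x))))" for x
    using gRe[of "E x"] R(1) by (simp add: Enorm Ecis)
  ultimately have h1: "((\<lambda>x. ln (cmod (f (cis (2 * pi * x))))) has_integral Re (g 0)) {0..1}" by simp
  define h where "h = (\<lambda>t. ln (cmod (f (cis t))))"
  from has_integral_affinity01[OF h1, of "1/(2*pi)" 0]
  have "(h has_integral (2 * pi * Re (g 0))) ((\<lambda>x. x / (1 / (2 * pi)) - 0 / (1 / (2 * pi))) ` {0..1})"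
    by (simp add: h_def)
  moreover have "(\<lambda>x. x / (1 / (2 * pi)) - 0 / (1 / (2 * pi))) ` {0..1} = {0..2*pi}"
  proof
    show "(\<lambda>x. x / (1 / (2 * pi)) - 0 / (1 / (2 * pi))) ` {0..1} \<subseteq> {0..2*pi}" by auto
    show "{0..2*pi} \<subseteq> (\<lambda>x. x / (1 / (2 * pi)) - 0 / (1 / (2 * pi))) ` {0..1}"
    proof
      fix t assume "t \<in> {0..2*pi}"
      hence "t / (2*pi) \<in> {0..1}" "t = (t / (2*pi)) / (1 / (2 * pi)) - 0 / (1 / (2 * pi))"
        by (auto simp: field_simps)
      thus "t \<in> (\<lambda>x. x / (1 / (2 * pi)) - 0 / (1 / (2 * pi))) ` {0..1}" by blast
    qed
  qed
  ultimately have hi: "(h has_integral (2 * pi * Re (g 0))) {0..2*pi}" by simp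
  have "continuous_on {0..2*pi} h" unfolding h_def
    using nz by (intro continuous_intros continuous_on_compose2[OF contf]) auto
  hence si: "set_integrable lborel {0..2*pi} h" by (rule borel_integrable_atLeastAtMost')
  thus "set_integrable lborel {0..2*pi} (\<lambda>t. ln (cmod (f (cis t))))" by (simp add: h_def)
  have "(LINT t:{0..2*pi}|lborel. h t) = integral {0..2*pi} h"
    using si by (rule set_borel_integral_eq_integral)
  also have "\<dots> = 2 * pi * Re (g 0)" using hi by (rule integral_unique)
  also have "Re (g 0) = ln (cmod (f 0))" using gRe[of 0] R(1) by simp
  finally show "(LINT t:{0..2*pi}|lborel. ln (cmod (f (cis t)))) = 2 * pi * ln (cmod (f 0))"
    by (simp add: h_def)
qed

definition mk4 :: "complex \<times> complex \<times> complex \<times> complex \<Rightarrow> complex^2^2" where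
  "mk4 p = (\<chi> i j. if i = 1 then (if j = 1 then fst p else fst (snd p))
                    else (if j = 1 then fst (snd (snd p)) else snd (snd (snd p))))"

lemma mk4_cont: "continuous_on UNIV mk4"
  unfolding mk4_def
proof (intro continuous_on_vec_lambda)
  fix i j :: 2
  show "continuous_on UNIV (\<lambda>p::complex \<times> complex \<times> complex \<times> complex. if i = 1 then (if j = 1 then fst p else fst (snd p))
                    else (if j = 1 then fst (snd (snd p)) else snd (snd (snd p))))"
    by (cases "i = 1"; cases "j = 1") (auto intro!: continuous_intros)
qed

lemma mat_measurable:
  fixes f :: "'b \<Rightarrow> complex^2^2"
  assumes "(\<lambda>x. f x $ 1 $ 1) \<in> borel_measurable N" "(\<lambda>x. f x $ 1 $ 2) \<in> borel_measurable N"
    "(\<lambda>x. f x $ 2 $ 1) \<in> borel_measurable N" "(\<lambda>x. f x $ 2 $ 2) \<in> borel_measurable N"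
  shows "f \<in> borel_measurable N"
proof -
  have "f = (\<lambda>x. mk4 (f x $ 1 $ 1, f x $ 1 $ 2, f x $ 2 $ 1, f x $ 2 $ 2))"
    by (rule ext) (simp add: mk4_def mat_eq2)
  also have "\<dots> \<in> borel_measurable N"
    by (intro borel_measurable_continuous_on[OF mk4_cont] borel_measurable_Pair assms)
  finally show ?thesis .
qed

lemma nth_measurable: "(\<lambda>x::'c::real_normed_vector^'n. x $ i) \<in> borel_measurable borel"
  by (rule borel_measurable_continuous_onI) (simp add: linear_continuous_on bounded_linear_vec_nth)

lemma entry_measurable:
  fixes f :: "'b \<Rightarrow> complex^2^2"
  assumes "f \<in> borel_measurable N"
  shows "(\<lambda>x. f x $ i $ j) \<in> borel_measurable N"
proof -
  have "(\<lambda>x. f x $ i) \<in> borel_measurable N"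
    using measurable_compose[OF assms nth_measurable] by simp
  thus ?thesis using measurable_compose[OF _ nth_measurable] by blast
qed

lemma mult_measurable:
  fixes f g :: "'b \<Rightarrow> complex^2^2"
  assumes "f \<in> borel_measurable N" "g \<in> borel_measurable N"
  shows "(\<lambda>x. f x ** g x) \<in> borel_measurable N"
  by (rule mat_measurable; unfold mm_entry;
      intro borel_measurable_add borel_measurable_times entry_measurable assms)

lemma funpow_measurable:
  assumes "\<tau> \<in> M \<rightarrow>\<^sub>M M"
  shows "(\<tau> ^^ n) \<in> M \<rightarrow>\<^sub>M M"
proof (induction n)
  case 0 thus ?case by simp
next
  case (Suc n) thus ?case using measurable_comp[OF Suc assms] by (simp add: funpow_Suc_right o_def)
qed

lemma transfer_measurable:
  fixes C :: "'a \<Rightarrow> complex^2^2"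
  assumes C: "C \<in> borel_measurable M" and g: "g \<in> N \<rightarrow>\<^sub>M M" and h: "h \<in> borel_measurable N"
  shows "(\<lambda>x. transfer C (g x) (h x)) \<in> borel_measurable N"
proof -
  have Cg: "(\<lambda>x. C (g x)) \<in> borel_measurable N" using measurable_compose[OF g C] .
  note e = entry_measurable[OF Cg]
  show ?thesis
    by (rule mat_measurable; unfold transfer_entries det_2 ca_def cb_def cc_def;
        intro borel_measurable_divide borel_measurable_diff borel_measurable_times borel_measurable_uminus e h)
qed

lemma transfer_n_measurable:
  fixes C :: "'a \<Rightarrow> complex^2^2"
  assumes C: "C \<in> borel_measurable M" and tau: "\<tau> \<in> M \<rightarrow>\<^sub>M M"
    and g: "g \<in> N \<rightarrow>\<^sub>M M" and h: "h \<in> borel_measurable N"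
  shows "(\<lambda>x. transfer_n C \<tau> n (g x) (h x)) \<in> borel_measurable N"
proof (induction n)
  case 0 thus ?case by simp
next
  case (Suc n)
  have "(\<lambda>x. (\<tau> ^^ n) (g x)) \<in> N \<rightarrow>\<^sub>M M" using measurable_compose[OF g funpow_measurable[OF tau]] .
  from transfer_measurable[OF C this h]
  show ?case using mult_measurable Suc by simp
qed

lemma L_measurable:
  fixes C :: "'a \<Rightarrow> complex^2^2"
  assumes C: "C \<in> borel_measurable M" and tau: "\<tau> \<in> M \<rightarrow>\<^sub>M M"
    and g: "g \<in> N \<rightarrow>\<^sub>M M" and h: "h \<in> borel_measurable N"
  shows "(\<lambda>x. ln (opnorm (transfer_n C \<tau> n (g x) (h x)))) \<in> borel_measurable N"
  by (intro borel_measurable_ln borel_measurable_continuous_on[OF opnorm_continuous]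
      transfer_n_measurable[OF C tau g h])

lemma fekete_aux:
  fixes F :: "nat \<Rightarrow> real"
  assumes sub: "\<And>m n. F (m + n) \<le> F m + F n"
  shows "F (q * m + r) \<le> real q * F m + F r"
proof (induction q)
  case 0 thus ?case by simp
next
  case (Suc q)
  have "F (Suc q * m + r) = F (m + (q * m + r))" by (simp add: add.assoc)
  also have "\<dots> \<le> F m + F (q * m + r)" by (rule sub)
  also have "\<dots> \<le> F m + (real q * F m + F r)" using Suc by simp
  finally show ?case by (simp add: algebra_simps)
qed

lemma fekete:
  fixes F :: "nat \<Rightarrow> real"
  assumes sub: "\<And>m n. F (m + n) \<le> F m + F n" and nonneg: "\<And>n. 0 \<le> F n"
  shows "(\<lambda>n. F n / real n) \<longlonglongrightarrow> Inf ((\<lambda>n. F n / real n) ` {1..})"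
proof (rule LIMSEQ_I)
  define A where "A = (\<lambda>n. F n / real n) ` {1..}"
  define L where "L = Inf A"
  have bdd: "bdd_below A" unfolding A_def using nonneg by (intro bdd_belowI[of _ 0]) auto
  have ne: "A \<noteq> {}" unfolding A_def by auto
  have low: "L \<le> F n / real n" if "n \<ge> 1" for n
    unfolding L_def using bdd that by (intro cInf_lower) (auto simp: A_def)
  fix r :: real assume r: "0 < r"
  have "L < L + r/2" using r by simp
  then obtain x where "x \<in> A" "x < L + r/2" using cInf_lessD[OF ne] unfolding L_def by blast
  then obtain m where m: "m \<ge> 1" "F m / real m < L + r/2" unfolding A_def by auto
  define B where "B = sum F {..<m}"
  have B0: "0 \<le> B" unfolding B_def using nonneg by (simp add: sum_nonneg)
  have FrB: "F r' \<le> B" if "r' < m" for r'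
    unfolding B_def using that nonneg by (intro member_le_sum) auto
  obtain N :: nat where N: "real N > 2 * B / r" using reals_Archimedean2 by blast
  show "\<exists>no. \<forall>n\<ge>no. norm (F n / real n - Inf ((\<lambda>n. F n / real n) ` {1..})) < r"
  proof (intro exI[of _ "Suc N"] allI impI)
    fix n assume n: "n \<ge> Suc N"
    hence n1: "n \<ge> 1" and npos: "real n > 0" by auto
    define q where "q = n div m"
    define r' where "r' = n mod m"
    have nqr: "n = q * m + r'" by (simp add: q_def r'_def)
    have r'm: "r' < m" using m by (simp add: r'_def)
    have "F n \<le> real q * F m + F r'" using fekete_aux[OF sub] nqr by metis
    also have "\<dots> \<le> real q * F m + B" using FrB[OF r'm] by simp
    finally have Fn: "F n \<le> real q * F m + B" .
    have "real q * real m \<le> real n" using nqr by (metis le_add1 of_nat_le_iff of_nat_mult)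
    hence "real q \<le> real n / real m" using m by (simp add: field_simps)
    hence "real q * F m \<le> real n / real m * F m" using nonneg by (intro mult_right_mono) auto
    hence "F n \<le> real n * (F m / real m) + B" using Fn by (simp add: field_simps)
    hence "F n / real n \<le> F m / real m + B / real n" using npos by (simp add: field_simps)
    moreover have "B / real n < r / 2"
    proof -
      have "2 * B / r < real n" using N n by linarith
      thus ?thesis using r npos B0 by (simp add: field_simps)
    qed
    ultimately have "F n / real n < L + r" using m by linarith
    moreover have "L \<le> F n / real n" by (rule low[OF n1])
    ultimately show "norm (F n / real n - Inf ((\<lambda>n. F n / real n) ` {1..})) < r"
      unfolding L_def[symmetric, unfolded A_def] by simp
  qed
qed

lemma ln_one_div: "ln (1 / x) = - ln (x::real)"
  by (simp add: ln_inverse[symmetric] divide_inverse)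

definition Lf :: "('a \<Rightarrow> complex^2^2) \<Rightarrow> ('a \<Rightarrow> 'a) \<Rightarrow> nat \<Rightarrow> 'a \<Rightarrow> complex \<Rightarrow> real" where
  "Lf C \<tau> n \<omega> z = ln (opnorm (transfer_n C \<tau> n \<omega> z))"

lemma good_upto_shift:
  assumes "good_upto C \<tau> (m + n) \<omega>"
  shows "good_upto C \<tau> m ((\<tau> ^^ n) \<omega>)" "good_upto C \<tau> n \<omega>"
proof -
  have e: "(\<tau> ^^ k) ((\<tau> ^^ n) \<omega>) = (\<tau> ^^ (k + n)) \<omega>" for k by (simp add: funpow_add)
  show "good_upto C \<tau> m ((\<tau> ^^ n) \<omega>)" using assms unfolding good_upto_def e by auto
  show "good_upto C \<tau> n \<omega>" using assms unfolding good_upto_def by auto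
qed

context
  fixes M :: "'a measure" and \<tau> :: "'a \<Rightarrow> 'a" and C :: "'a \<Rightarrow> complex^2^2"
  assumes erg: "ergodic_system M \<tau>"
    and meas: "C \<in> borel_measurable M"
    and unit: "\<forall>\<omega>\<in>space M. unitary2 (C \<omega>)"
    and a_nz: "AE \<omega> in M. ca (C \<omega>) \<noteq> 0"
    and fin: "(\<integral>\<^sup>+\<omega>. ennreal (ln (1 / cmod (ca (C \<omega>)))) \<partial>M) < \<infinity>"
begin

lemma P: "prob_space M" using erg by (simp add: ergodic_system_def)
lemma tau: "\<tau> \<in> M \<rightarrow>\<^sub>M M" using erg by (simp add: ergodic_system_def measure_preserving_map_def)
lemma dtau: "distr M M \<tau> = M" using erg by (simp add: ergodic_system_def measure_preserving_map_def)

lemma tauk: "(\<tau> ^^ k) \<in> M \<rightarrow>\<^sub>M M" by (rule funpow_measurable[OF tau])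

lemma dtauk: "distr M M (\<tau> ^^ k) = M"
proof (induction k)
  case 0 thus ?case by simp
next
  case (Suc k)
  have "distr M M (\<tau> ^^ Suc k) = distr M M (\<tau> \<circ> (\<tau> ^^ k))" by simp
  also have "\<dots> = distr (distr M M (\<tau> ^^ k)) M \<tau>" by (rule distr_distr[OF tau tauk, symmetric])
  also have "\<dots> = M" using Suc dtau by simp
  finally show ?case .
qed

lemma ae_shift: assumes "AE \<omega> in M. Q \<omega>" shows "AE \<omega> in M. Q ((\<tau> ^^ k) \<omega>)"
proof -
  have "AE \<omega> in distr M M (\<tau> ^^ k). Q \<omega>" unfolding dtauk by (rule assms)
  from AE_distrD[OF tauk this] show ?thesis .
qed

lemma int_shift: "f \<in> borel_measurable M \<Longrightarrow> (\<integral>\<omega>. f ((\<tau> ^^ k) \<omega>) \<partial>M) = (\<integral>\<omega>. f \<omega> \<partial>M)"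
  for f :: "'a \<Rightarrow> real"
  using integral_distr[OF tauk, of f k] dtauk by simp

lemma integrable_shift: "integrable M f \<Longrightarrow> integrable M (\<lambda>\<omega>. f ((\<tau> ^^ k) \<omega>))"
  for f :: "'a \<Rightarrow> real"
  using integrable_distr_eq[OF tauk, of f k] dtauk by (simp add: borel_measurable_integrable)

lemma good: "AE \<omega> in M. \<forall>n. good_upto C \<tau> n \<omega>"
proof -
  have "AE \<omega> in M. \<forall>k. unitary2 (C ((\<tau> ^^ k) \<omega>)) \<and> ca (C ((\<tau> ^^ k) \<omega>)) \<noteq> 0"
  proof (subst AE_all_countable, intro allI AE_conjI)
    fix k
    show "AE \<omega> in M. unitary2 (C ((\<tau> ^^ k) \<omega>))"
      using unit measurable_space[OF tauk] by (intro AE_I2) auto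
    show "AE \<omega> in M. ca (C ((\<tau> ^^ k) \<omega>)) \<noteq> 0" by (rule ae_shift[OF a_nz])
  qed
  thus ?thesis by eventually_elim (auto simp: good_upto_def)
qed

definition s :: "'a \<Rightarrow> real" where "s \<omega> = ln (1 / cmod (ca (C \<omega>)))"

lemma s_meas: "s \<in> borel_measurable M"
  unfolding s_def ca_def using entry_measurable[OF meas] by measurable

lemma ca_le1: "unitary2 U \<Longrightarrow> cmod (ca U) \<le> 1"
proof -
  assume U: "unitary2 U"
  have "complex_of_real (cmod (ca U) ^ 2 + cmod (cb U) ^ 2) = 1" using unitary_facts(1)[OF U]
    complex_norm_square[of "ca U"] complex_norm_square[of "cb U"] unfolding of_real_add by simp
  hence "cmod (ca U) ^ 2 + cmod (cb U) ^ 2 = 1" using of_real_eq_1_iff by blast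
  hence "cmod (ca U) ^ 2 \<le> 1" by (smt (verit) zero_le_power2)
  thus ?thesis by (simp add: power_le_one_iff)
qed

lemma s_nonneg_ae: "AE \<omega> in M. 0 \<le> s \<omega>"
  using a_nz
proof (rule AE_mp, intro AE_I2 impI)
  fix \<omega> assume "\<omega> \<in> space M" "ca (C \<omega>) \<noteq> 0"
  hence "cmod (ca (C \<omega>)) \<le> 1" "cmod (ca (C \<omega>)) > 0" using unit ca_le1 by auto
  thus "0 \<le> s \<omega>" unfolding s_def ln_one_div by simp
qed

lemma s_int: "integrable M s"
  by (rule integrableI_nonneg[OF s_meas s_nonneg_ae]) (use fin in \<open>simp add: s_def\<close>)

definition I :: real where "I = (\<integral>\<omega>. s \<omega> \<partial>M)"

lemma I_nonneg: "0 \<le> I"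
  unfolding I_def by (rule integral_nonneg_AE[OF s_nonneg_ae])

definition S :: "nat \<Rightarrow> 'a \<Rightarrow> real" where "S n \<omega> = (\<Sum>k<n. s ((\<tau> ^^ k) \<omega>))"

lemma S_int: "integrable M (S n)"
  unfolding S_def by (rule Bochner_Integration.integrable_sum) (rule integrable_shift[OF s_int])

lemma S_integral: "(\<integral>\<omega>. S n \<omega> \<partial>M) = real n * I"
proof -
  have "(\<integral>\<omega>. S n \<omega> \<partial>M) = (\<Sum>k<n. \<integral>\<omega>. s ((\<tau> ^^ k) \<omega>) \<partial>M)"
    unfolding S_def by (rule Bochner_Integration.integral_sum) (rule integrable_shift[OF s_int])
  also have "\<dots> = (\<Sum>k<n. I)" unfolding I_def using int_shift[OF s_meas] by simp
  finally show ?thesis by simp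
qed

lemma S_Suc: "S (Suc n) \<omega> = S n \<omega> + s ((\<tau> ^^ n) \<omega>)" by (simp add: S_def)

lemma L_bounds:
  assumes g: "good_upto C \<tau> n \<omega>" and z: "cmod z = 1"
  shows "ln (cmod (vq C \<tau> n \<omega> z $ 1)) + S n \<omega> \<le> Lf C \<tau> n \<omega> z"
        "Lf C \<tau> n \<omega> z \<le> ln 4 + ln (cmod (vq C \<tau> n \<omega> z $ 1)) + S n \<omega>"
        "0 \<le> Lf C \<tau> n \<omega> z"
proof -
  define T where "T = transfer_n C \<tau> n \<omega> z"
  have u: "u11 T" unfolding T_def using g z by (intro transfer_n_u11) (auto simp: good_upto_def)
  note uo = u11_opnorm[OF u]
  have z0: "z \<noteq> 0" using z by auto
  have a0: "\<And>k. k < n \<Longrightarrow> cmod (ca (C ((\<tau> ^^ k) \<omega>))) > 0" using g by (simp add: good_upto_def)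
  have q0: "cmod (vq C \<tau> n \<omega> z $ 1) > 0" using vq_nonzero[OF g] z by simp
  have "T $ 1 $ 1 = vq C \<tau> n \<omega> z $ 1 / (z ^ n * (\<Prod>k<n. ca (C ((\<tau> ^^ k) \<omega>))))"
    unfolding T_def by (rule transfer_n_col[OF z0])
  hence "cmod (T $ 1 $ 1) = cmod (vq C \<tau> n \<omega> z $ 1) / (\<Prod>k<n. cmod (ca (C ((\<tau> ^^ k) \<omega>))))"
    by (simp add: norm_divide norm_mult norm_power z prod_norm)
  hence "ln (cmod (T $ 1 $ 1)) = ln (cmod (vq C \<tau> n \<omega> z $ 1)) - ln (\<Prod>k<n. cmod (ca (C ((\<tau> ^^ k) \<omega>))))"
    using q0 a0 by (simp add: ln_div prod_pos)
  also have "ln (\<Prod>k<n. cmod (ca (C ((\<tau> ^^ k) \<omega>)))) = (\<Sum>k<n. ln (cmod (ca (C ((\<tau> ^^ k) \<omega>)))))"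
    using a0 by (intro ln_prod) auto
  also have "\<dots> = - S n \<omega>" by (simp add: S_def s_def ln_one_div sum_negf)
  finally have lnp: "ln (cmod (T $ 1 $ 1)) = ln (cmod (vq C \<tau> n \<omega> z $ 1)) + S n \<omega>" by simp
  have p0: "cmod (T $ 1 $ 1) > 0" using uo(4) by linarith
  have "ln (cmod (T $ 1 $ 1)) \<le> ln (opnorm T)" using uo(1) p0 by (rule ln_mono)
  thus "ln (cmod (vq C \<tau> n \<omega> z $ 1)) + S n \<omega> \<le> Lf C \<tau> n \<omega> z"
    using lnp by (simp add: Lf_def T_def)
  have "ln (opnorm T) \<le> ln (4 * cmod (T $ 1 $ 1))" using uo(3) uo(2) by (intro ln_mono) auto
  also have "\<dots> = ln 4 + ln (cmod (T $ 1 $ 1))" using p0 by (simp add: ln_mult)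
  finally show "Lf C \<tau> n \<omega> z \<le> ln 4 + ln (cmod (vq C \<tau> n \<omega> z $ 1)) + S n \<omega>"
    using lnp by (simp add: Lf_def T_def)
  show "0 \<le> Lf C \<tau> n \<omega> z" using uo(3) by (simp add: Lf_def T_def)
qed

lemma L_one:
  assumes g: "good_upto C \<tau> (m + n) \<omega>" and z: "cmod z = 1"
  shows "1 \<le> opnorm (transfer_n C \<tau> m ((\<tau> ^^ n) \<omega>) z)" "1 \<le> opnorm (transfer_n C \<tau> n \<omega> z)"
  using good_upto_shift[OF g] z
  by (auto intro!: u11_opnorm(3) transfer_n_u11 simp: good_upto_def)

lemma L_sub:
  assumes g: "good_upto C \<tau> (m + n) \<omega>" and z: "cmod z = 1"
  shows "Lf C \<tau> (m + n) \<omega> z \<le> Lf C \<tau> m ((\<tau> ^^ n) \<omega>) z + Lf C \<tau> n \<omega> z"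
proof -
  note o = L_one[OF g z]
  have "u11 (transfer_n C \<tau> (m + n) \<omega> z)" using g z by (intro transfer_n_u11) (auto simp: good_upto_def)
  hence o3: "1 \<le> opnorm (transfer_n C \<tau> (m + n) \<omega> z)" by (rule u11_opnorm(3))
  have "opnorm (transfer_n C \<tau> (m + n) \<omega> z) \<le> opnorm (transfer_n C \<tau> m ((\<tau> ^^ n) \<omega>) z) * opnorm (transfer_n C \<tau> n \<omega> z)"
    unfolding transfer_n_add by (rule opnorm_mult)
  hence "ln (opnorm (transfer_n C \<tau> (m + n) \<omega> z)) \<le> ln (opnorm (transfer_n C \<tau> m ((\<tau> ^^ n) \<omega>) z) * opnorm (transfer_n C \<tau> n \<omega> z))"
    using o o3 by simp
  also have "\<dots> = ln (opnorm (transfer_n C \<tau> m ((\<tau> ^^ n) \<omega>) z)) + ln (opnorm (transfer_n C \<tau> n \<omega> z))"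
    using o by (simp add: ln_mult)
  finally show ?thesis by (simp add: Lf_def)
qed

lemma L_upper:
  assumes g: "good_upto C \<tau> n \<omega>" and z: "cmod z = 1"
  shows "Lf C \<tau> n \<omega> z \<le> real n * ln 4 + S n \<omega>"
  using g
proof (induction n)
  case 0 thus ?case by (simp add: Lf_def opnorm_one S_def)
next
  case (Suc n)
  have g1: "good_upto C \<tau> (1 + n) \<omega>" using Suc.prems by simp
  have gn: "good_upto C \<tau> n \<omega>" and gm: "good_upto C \<tau> 1 ((\<tau> ^^ n) \<omega>)" using good_upto_shift[OF g1] by auto
  have "Lf C \<tau> (Suc n) \<omega> z \<le> Lf C \<tau> 1 ((\<tau> ^^ n) \<omega>) z + Lf C \<tau> n \<omega> z"
    using L_sub[OF g1 z] by simp
  also have "Lf C \<tau> 1 ((\<tau> ^^ n) \<omega>) z \<le> ln 4 + ln (cmod (vq C \<tau> 1 ((\<tau> ^^ n) \<omega>) z $ 1)) + S 1 ((\<tau> ^^ n) \<omega>)"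
    by (rule L_bounds(2)[OF gm z])
  also have "cmod (vq C \<tau> 1 ((\<tau> ^^ n) \<omega>) z $ 1) = 1"
  proof -
    have U: "unitary2 (C ((\<tau> ^^ n) \<omega>))" using gm by (simp add: good_upto_def)
    have "complex_of_real (cmod (det (C ((\<tau> ^^ n) \<omega>))) ^ 2) = 1"
      using unitary_facts(4)[OF U] complex_norm_square[of "det (C ((\<tau> ^^ n) \<omega>))"] by simp
    hence "cmod (det (C ((\<tau> ^^ n) \<omega>))) ^ 2 = 1" using of_real_eq_1_iff by blast
    hence "cmod (det (C ((\<tau> ^^ n) \<omega>))) = 1" using norm_ge_zero[of "det (C ((\<tau> ^^ n) \<omega>))"]
      by (auto simp: power2_eq_1_iff)
    thus ?thesis using vq_entries(1)[of C \<tau> 0 "(\<tau> ^^ n) \<omega>" z] by simp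
  qed
  also have "S 1 ((\<tau> ^^ n) \<omega>) = s ((\<tau> ^^ n) \<omega>)" by (simp add: S_def)
  finally show ?case using Suc.IH[OF gn] by (simp add: S_Suc algebra_simps)
qed

lemma IC: "integrable M (\<lambda>x. c::real)"
  using finite_measure.integrable_const[OF prob_space.finite_measure[OF P]] .

lemma INTC: "(\<integral>x. c \<partial>M) = (c::real)"
  using prob_space.prob_space[OF P] by simp

lemma Lf_meas_M: "(\<lambda>\<omega>. Lf C \<tau> n \<omega> z) \<in> borel_measurable M"
  unfolding Lf_def using L_measurable[OF meas tau, of "\<lambda>x. x" M "\<lambda>_. z" n] by simp

lemma Lf_bound_ae: "cmod z = 1 \<Longrightarrow> AE \<omega> in M. 0 \<le> Lf C \<tau> n \<omega> z \<and> Lf C \<tau> n \<omega> z \<le> real n * ln 4 + S n \<omega>"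
  using good by eventually_elim (use L_bounds(3) L_upper in blast)

lemma Lf_bound_cis: "AE \<omega> in M. 0 \<le> Lf C \<tau> n \<omega> (cis t) \<and> Lf C \<tau> n \<omega> (cis t) \<le> real n * ln 4 + S n \<omega>"
  by (rule Lf_bound_ae) simp

lemma Lf_int: assumes "cmod z = 1" shows "integrable M (\<lambda>\<omega>. Lf C \<tau> n \<omega> z)"
proof (rule Bochner_Integration.integrable_bound[where f = "\<lambda>\<omega>. real n * ln 4 + S n \<omega>"])
  show "integrable M (\<lambda>\<omega>. real n * ln 4 + S n \<omega>)"
    using IC S_int by (intro Bochner_Integration.integrable_add) auto
  show "(\<lambda>\<omega>. Lf C \<tau> n \<omega> z) \<in> borel_measurable M" by (rule Lf_meas_M)
  show "AE \<omega> in M. norm (Lf C \<tau> n \<omega> z) \<le> norm (real n * ln 4 + S n \<omega>)"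
    using Lf_bound_ae[OF assms, of n] by eventually_elim auto
qed

definition Ff :: "nat \<Rightarrow> real \<Rightarrow> real" where "Ff n t = (\<integral>\<omega>. Lf C \<tau> n \<omega> (cis t) \<partial>M)"

lemma Ff_nonneg: "0 \<le> Ff n t"
  unfolding Ff_def using Lf_bound_cis[of n t] by (intro integral_nonneg_AE) (auto elim: eventually_mono)

lemma Ff_upper: "Ff n t \<le> real n * (ln 4 + I)"
proof -
  have "Ff n t \<le> (\<integral>\<omega>. real n * ln 4 + S n \<omega> \<partial>M)"
    unfolding Ff_def
  proof (rule integral_mono_AE)
    show "integrable M (\<lambda>\<omega>. Lf C \<tau> n \<omega> (cis t))" by (rule Lf_int) simp
    show "integrable M (\<lambda>\<omega>. real n * ln 4 + S n \<omega>)"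
      using IC S_int by (intro Bochner_Integration.integrable_add) auto
    show "AE \<omega> in M. Lf C \<tau> n \<omega> (cis t) \<le> real n * ln 4 + S n \<omega>"
      using Lf_bound_cis[of n t] by eventually_elim auto
  qed
  also have "\<dots> = real n * ln 4 + real n * I"
    using IC S_int S_integral INTC
    by (subst Bochner_Integration.integral_add) auto
  finally show ?thesis by (simp add: algebra_simps)
qed

lemma Ff_sub: "Ff (m + n) t \<le> Ff m t + Ff n t"
proof -
  have i1: "integrable M (\<lambda>\<omega>. Lf C \<tau> m ((\<tau> ^^ n) \<omega>) (cis t))"
    by (rule integrable_shift) (rule Lf_int, simp)
  have i2: "integrable M (\<lambda>\<omega>. Lf C \<tau> n \<omega> (cis t))" by (rule Lf_int) simp
  have "Ff (m + n) t \<le> (\<integral>\<omega>. Lf C \<tau> m ((\<tau> ^^ n) \<omega>) (cis t) + Lf C \<tau> n \<omega> (cis t) \<partial>M)"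
    unfolding Ff_def
  proof (rule integral_mono_AE)
    show "integrable M (\<lambda>\<omega>. Lf C \<tau> (m + n) \<omega> (cis t))" by (rule Lf_int) simp
    show "integrable M (\<lambda>\<omega>. Lf C \<tau> m ((\<tau> ^^ n) \<omega>) (cis t) + Lf C \<tau> n \<omega> (cis t))"
      using i1 i2 by (rule Bochner_Integration.integrable_add)
    show "AE \<omega> in M. Lf C \<tau> (m + n) \<omega> (cis t) \<le> Lf C \<tau> m ((\<tau> ^^ n) \<omega>) (cis t) + Lf C \<tau> n \<omega> (cis t)"
      using good by eventually_elim (rule L_sub, auto)
  qed
  also have "\<dots> = (\<integral>\<omega>. Lf C \<tau> m ((\<tau> ^^ n) \<omega>) (cis t) \<partial>M) + Ff n t"
    unfolding Ff_def using i1 i2 by (rule Bochner_Integration.integral_add)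
  also have "(\<integral>\<omega>. Lf C \<tau> m ((\<tau> ^^ n) \<omega>) (cis t) \<partial>M) = Ff m t"
    unfolding Ff_def by (rule int_shift[OF Lf_meas_M])
  finally show ?thesis .
qed

lemma Ff_tendsto: "(\<lambda>n. Ff n t / real n) \<longlonglongrightarrow> lyapunov M \<tau> C (cis t)"
proof -
  have conv: "(\<lambda>n. Ff n t / real n) \<longlonglongrightarrow> Inf ((\<lambda>n. Ff n t / real n) ` {1..})"
    by (rule fekete) (rule Ff_sub, rule Ff_nonneg)
  have "lyapunov M \<tau> C (cis t) = lim (\<lambda>n. Ff n t / real n)"
    unfolding lyapunov_def Ff_def Lf_def by simp
  also have "\<dots> = Inf ((\<lambda>n. Ff n t / real n) ` {1..})" using conv by (rule limI)
  finally show ?thesis using conv by simp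
qed

lemma cis_meas: "cis \<in> borel_measurable borel"
  by (rule borel_measurable_continuous_onI) (intro continuous_intros)

lemma set_int_const: "set_integrable lborel {0..2*pi} (\<lambda>t. c::real)"
  by (rule borel_integrable_atLeastAtMost') (rule continuous_on_const)

lemma set_integral_const_pi: "(LINT t:{0..2*pi}|lborel. (c::real)) = 2 * pi * c"
proof -
  have "(LINT t:{0..2*pi}|lborel. c) = integral {0..2*pi} (\<lambda>t. c)"
    by (rule set_borel_integral_eq_integral(2)[OF set_int_const])
  thus ?thesis by simp
qed

lemma inner_int:
  assumes g: "\<forall>n. good_upto C \<tau> n \<omega>" and sp: "\<omega> \<in> space M"
  shows "set_integrable lborel {0..2*pi} (\<lambda>t. Lf C \<tau> n \<omega> (cis t))"
    "2 * pi * S n \<omega> \<le> (LINT t:{0..2*pi}|lborel. Lf C \<tau> n \<omega> (cis t))"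
    "(LINT t:{0..2*pi}|lborel. Lf C \<tau> n \<omega> (cis t)) \<le> 2 * pi * (ln 4 + S n \<omega>)"
proof -
  have gn: "good_upto C \<tau> n \<omega>" using g by simp
  define f where "f = (\<lambda>z. vq C \<tau> n \<omega> z $ 1)"
  define q where "q = (\<lambda>t. ln (cmod (f (cis t))))"
  have hol: "f holomorphic_on UNIV" unfolding f_def by (rule vq_holo)
  have nz: "\<And>z. cmod z \<le> 1 \<Longrightarrow> f z \<noteq> 0" unfolding f_def by (rule vq_nonzero[OF gn])
  note ml = mean_log[OF hol nz]
  have qi: "set_integrable lborel {0..2*pi} q" using ml(1) by (simp add: q_def)
  have q0: "(LINT t:{0..2*pi}|lborel. q t) = 0" using ml(2) vq_at0[OF gn] by (simp add: q_def f_def)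
  have Lm: "(\<lambda>t. Lf C \<tau> n \<omega> (cis t)) \<in> borel_measurable lborel"
    unfolding Lf_def using L_measurable[OF meas tau, of "\<lambda>_. \<omega>" lborel cis n] sp cis_meas
    by (simp add: measurable_const)
  have lb: "q t + S n \<omega> \<le> Lf C \<tau> n \<omega> (cis t)" for t
    using L_bounds(1)[OF gn, of "cis t"] by (simp add: q_def f_def)
  have ub: "Lf C \<tau> n \<omega> (cis t) \<le> ln 4 + q t + S n \<omega>" for t
    using L_bounds(2)[OF gn, of "cis t"] by (simp add: q_def f_def)
  have L0: "0 \<le> Lf C \<tau> n \<omega> (cis t)" for t
    using L_bounds(3)[OF gn, of "cis t"] by simp
  have domi: "set_integrable lborel {0..2*pi} (\<lambda>t. \<bar>q t\<bar> + (ln 4 + \<bar>S n \<omega>\<bar>))"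
    by (intro set_integral_add(1) set_integrable_abs qi set_int_const)
  show Li: "set_integrable lborel {0..2*pi} (\<lambda>t. Lf C \<tau> n \<omega> (cis t))"
    unfolding set_integrable_def
  proof (rule Bochner_Integration.integrable_bound[where f = "\<lambda>t. indicat_real {0..2*pi} t *\<^sub>R (\<bar>q t\<bar> + (ln 4 + \<bar>S n \<omega>\<bar>))"])
    show "integrable lborel (\<lambda>t. indicat_real {0..2*pi} t *\<^sub>R (\<bar>q t\<bar> + (ln 4 + \<bar>S n \<omega>\<bar>)))"
      using domi by (simp add: set_integrable_def)
    show "(\<lambda>t. indicat_real {0..2*pi} t *\<^sub>R Lf C \<tau> n \<omega> (cis t)) \<in> borel_measurable lborel"
      using Lm by measurable
    show "AE t in lborel. norm (indicat_real {0..2*pi} t *\<^sub>R Lf C \<tau> n \<omega> (cis t))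
        \<le> norm (indicat_real {0..2*pi} t *\<^sub>R (\<bar>q t\<bar> + (ln 4 + \<bar>S n \<omega>\<bar>)))"
    proof (intro AE_I2)
      fix t
      have "\<bar>Lf C \<tau> n \<omega> (cis t)\<bar> \<le> \<bar>q t\<bar> + (ln 4 + \<bar>S n \<omega>\<bar>)" using ub[of t] L0[of t] by simp
      thus "norm (indicat_real {0..2*pi} t *\<^sub>R Lf C \<tau> n \<omega> (cis t))
        \<le> norm (indicat_real {0..2*pi} t *\<^sub>R (\<bar>q t\<bar> + (ln 4 + \<bar>S n \<omega>\<bar>)))"
        by (auto simp: indicator_def)
    qed
  qed
  have "(LINT t:{0..2*pi}|lborel. q t + S n \<omega>) = 2 * pi * S n \<omega>"
    using qi set_int_const q0 set_integral_const_pi by (subst set_integral_add(2)) auto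
  moreover have "(LINT t:{0..2*pi}|lborel. q t + S n \<omega>) \<le> (LINT t:{0..2*pi}|lborel. Lf C \<tau> n \<omega> (cis t))"
    using lb by (intro set_integral_mono set_integral_add(1) qi set_int_const Li)
  ultimately show "2 * pi * S n \<omega> \<le> (LINT t:{0..2*pi}|lborel. Lf C \<tau> n \<omega> (cis t))" by simp
  have "(LINT t:{0..2*pi}|lborel. q t + (ln 4 + S n \<omega>)) = 2 * pi * (ln 4 + S n \<omega>)"
    using qi set_int_const q0 set_integral_const_pi by (subst set_integral_add(2)) auto
  moreover have "(LINT t:{0..2*pi}|lborel. Lf C \<tau> n \<omega> (cis t)) \<le> (LINT t:{0..2*pi}|lborel. q t + (ln 4 + S n \<omega>))"
    using ub by (intro set_integral_mono set_integral_add(1) qi set_int_const Li) (simp add: algebra_simps)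
  ultimately show "(LINT t:{0..2*pi}|lborel. Lf C \<tau> n \<omega> (cis t)) \<le> 2 * pi * (ln 4 + S n \<omega>)" by simp
qed

lemma snd_lborel_meas: "(\<lambda>p. cis (snd p)) \<in> borel_measurable (N \<Otimes>\<^sub>M lborel)"
proof -
  have "snd \<in> N \<Otimes>\<^sub>M lborel \<rightarrow>\<^sub>M lborel" by (rule measurable_snd)
  hence "snd \<in> borel_measurable (N \<Otimes>\<^sub>M lborel)" by simp
  thus ?thesis using measurable_compose[OF _ cis_meas] by blast
qed

lemma fst_lborel_meas: "(\<lambda>p. cis (fst p)) \<in> borel_measurable (lborel \<Otimes>\<^sub>M N)"
proof -
  have "fst \<in> lborel \<Otimes>\<^sub>M N \<rightarrow>\<^sub>M lborel" by (rule measurable_fst)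
  hence "fst \<in> borel_measurable (lborel \<Otimes>\<^sub>M N)" by simp
  thus ?thesis using measurable_compose[OF _ cis_meas] by blast
qed

lemma Lf_meas_pair: "(\<lambda>p. Lf C \<tau> n (fst p) (cis (snd p))) \<in> borel_measurable (M \<Otimes>\<^sub>M lborel)"
  unfolding Lf_def by (rule L_measurable[OF meas tau measurable_fst snd_lborel_meas])

lemma Lf_meas_pair': "(\<lambda>p. Lf C \<tau> n (snd p) (cis (fst p))) \<in> borel_measurable (lborel \<Otimes>\<^sub>M M)"
  unfolding Lf_def by (rule L_measurable[OF meas tau measurable_snd fst_lborel_meas])

lemma sfM: "sigma_finite_measure M"
  by (rule finite_measure.sigma_finite_measure[OF prob_space.finite_measure[OF P]])

lemma good_sp: "AE \<omega> in M. (\<forall>n. good_upto C \<tau> n \<omega>) \<and> \<omega> \<in> space M"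
  using good AE_space by eventually_elim auto

definition J :: "nat \<Rightarrow> 'a \<Rightarrow> real" where
  "J n \<omega> = (LINT t:{0..2*pi}|lborel. Lf C \<tau> n \<omega> (cis t))"

lemma J_meas: "J n \<in> borel_measurable M"
proof -
  have "(\<lambda>(x, y). indicat_real {0..2*pi} y *\<^sub>R Lf C \<tau> n x (cis y)) \<in> borel_measurable (M \<Otimes>\<^sub>M lborel)"
    using Lf_meas_pair[of n] by (simp add: split_beta') measurable
  from sigma_finite_measure.borel_measurable_lebesgue_integral[OF sigma_finite_lborel this]
  show ?thesis unfolding J_def set_lebesgue_integral_def by simp
qed

lemma J_bounds_ae: "AE \<omega> in M. 2 * pi * S n \<omega> \<le> J n \<omega> \<and> J n \<omega> \<le> 2 * pi * (ln 4 + S n \<omega>)"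
  using good_sp by eventually_elim (use inner_int J_def in auto)

lemma J_int: "integrable M (J n)"
proof (rule Bochner_Integration.integrable_bound[where f = "\<lambda>\<omega>. 2 * pi * \<bar>S n \<omega>\<bar> + 2 * pi * ln 4"])
  show "integrable M (\<lambda>\<omega>. 2 * pi * \<bar>S n \<omega>\<bar> + 2 * pi * ln 4)"
    using S_int IC by (intro Bochner_Integration.integrable_add integrable_mult_right integrable_abs) auto
  show "J n \<in> borel_measurable M" by (rule J_meas)
  show "AE \<omega> in M. norm (J n \<omega>) \<le> norm (2 * pi * \<bar>S n \<omega>\<bar> + 2 * pi * ln 4)"
    using J_bounds_ae[of n]
  proof eventually_elim
    case (elim \<omega>)
    have "0 \<le> ln (4::real)" by simp
    moreover have "2*pi*S n \<omega> \<le> 2*pi*\<bar>S n \<omega>\<bar>" "2*pi*(- S n \<omega>) \<le> 2*pi*\<bar>S n \<omega>\<bar>"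
      using pi_gt_zero by (intro mult_left_mono; simp)+
    moreover have "0 \<le> 2*pi*\<bar>S n \<omega>\<bar> + 2*pi*ln 4" by simp
    moreover have "2 * pi * (ln 4 + S n \<omega>) = 2*pi*S n \<omega> + 2*pi*ln 4" "2 * pi * - S n \<omega> = - (2*pi*S n \<omega>)"
      by (simp_all add: algebra_simps)
    ultimately show ?case using elim unfolding real_norm_def abs_le_iff by linarith
  qed
qed

lemma fubini_step:
  "(LINT t:{0..2*pi}|lborel. Ff n t) = (\<integral>\<omega>. J n \<omega> \<partial>M)"
proof -
  interpret pf: pair_sigma_finite M lborel by (intro pair_sigma_finite.intro sfM sigma_finite_lborel)
  define f where "f = (\<lambda>\<omega> t. indicat_real {0..2*pi} t * Lf C \<tau> n \<omega> (cis t))"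
  have fm: "(\<lambda>(x, y). f x y) \<in> borel_measurable (M \<Otimes>\<^sub>M lborel)"
    unfolding f_def using Lf_meas_pair[of n] by (simp add: split_beta') measurable
  have int: "integrable (M \<Otimes>\<^sub>M lborel) (\<lambda>(x, y). f x y)"
  proof (rule pf.Fubini_integrable)
    show "(\<lambda>(x, y). f x y) \<in> borel_measurable (M \<Otimes>\<^sub>M lborel)" by (rule fm)
    have "AE \<omega> in M. (LINT y|lborel. norm ((\<lambda>(x, y). f x y) (\<omega>, y))) = J n \<omega>"
      using good_sp
    proof eventually_elim
      case (elim \<omega>)
      have "norm ((\<lambda>(x, y). f x y) (\<omega>, y)) = indicat_real {0..2*pi} y *\<^sub>R Lf C \<tau> n \<omega> (cis y)" for y
        using L_bounds(3)[of n \<omega> "cis y"] elim by (simp add: f_def abs_mult)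
      thus ?case by (simp add: J_def set_lebesgue_integral_def)
    qed
    moreover have "(\<lambda>\<omega>. LINT y|lborel. norm ((\<lambda>(x, y). f x y) (\<omega>, y))) \<in> borel_measurable M"
    proof -
      have "(\<lambda>(x, y). norm ((\<lambda>(x, y). f x y) (x, y))) \<in> borel_measurable (M \<Otimes>\<^sub>M lborel)"
        using fm by measurable
      from sigma_finite_measure.borel_measurable_lebesgue_integral[OF sigma_finite_lborel this]
      show ?thesis by simp
    qed
    ultimately show "integrable M (\<lambda>\<omega>. LINT y|lborel. norm ((\<lambda>(x, y). f x y) (\<omega>, y)))"
      using J_int[of n] by (subst integrable_cong_AE) auto
    show "AE \<omega> in M. integrable lborel (\<lambda>y. (\<lambda>(x, y). f x y) (\<omega>, y))"
      using good_sp by eventually_elim (use inner_int(1) in \<open>auto simp: f_def set_integrable_def\<close>)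
  qed
  have "(LINT t|lborel. LINT \<omega>|M. f \<omega> t) = (LINT \<omega>|M. LINT t|lborel. f \<omega> t)"
    using pf.Fubini_integral[OF int] by simp
  moreover have "(LINT \<omega>|M. f \<omega> t) = indicat_real {0..2*pi} t * Ff n t" for t
    by (simp add: f_def Ff_def)
  moreover have "(LINT t|lborel. f \<omega> t) = J n \<omega>" for \<omega>
    by (simp add: f_def J_def set_lebesgue_integral_def)
  ultimately show ?thesis by (simp add: set_lebesgue_integral_def)
qed

lemma fubini_bounds:
  "2 * pi * (real n * I) \<le> (LINT t:{0..2*pi}|lborel. Ff n t)"
  "(LINT t:{0..2*pi}|lborel. Ff n t) \<le> 2 * pi * (ln 4 + real n * I)"
proof -
  have iS: "integrable M (\<lambda>\<omega>. 2 * pi * S n \<omega>)" using S_int by (intro integrable_mult_right) auto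
  have iS2: "integrable M (\<lambda>\<omega>. 2 * pi * (ln 4 + S n \<omega>))"
    using S_int IC by (intro integrable_mult_right Bochner_Integration.integrable_add) auto
  have "(\<integral>\<omega>. 2 * pi * S n \<omega> \<partial>M) \<le> (\<integral>\<omega>. J n \<omega> \<partial>M)"
    using iS J_int J_bounds_ae[of n] by (intro integral_mono_AE) (auto elim: eventually_mono)
  moreover have "(\<integral>\<omega>. 2 * pi * S n \<omega> \<partial>M) = 2 * pi * (real n * I)"
    using S_integral by simp
  ultimately show "2 * pi * (real n * I) \<le> (LINT t:{0..2*pi}|lborel. Ff n t)" by (simp add: fubini_step)
  have "(\<integral>\<omega>. J n \<omega> \<partial>M) \<le> (\<integral>\<omega>. 2 * pi * (ln 4 + S n \<omega>) \<partial>M)"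
    using iS2 J_int J_bounds_ae[of n] by (intro integral_mono_AE) (auto elim: eventually_mono)
  moreover have "(\<integral>\<omega>. 2 * pi * (ln 4 + S n \<omega>) \<partial>M) = 2 * pi * (ln 4 + real n * I)"
    using S_int IC S_integral INTC prob_space.prob_space[OF P] by (simp add: Bochner_Integration.integral_add)
  ultimately show "(LINT t:{0..2*pi}|lborel. Ff n t) \<le> 2 * pi * (ln 4 + real n * I)" by (simp add: fubini_step)
qed

lemma Ff_meas: "(\<lambda>t. Ff n t) \<in> borel_measurable lborel"
proof -
  have "(\<lambda>(t, \<omega>). Lf C \<tau> n \<omega> (cis t)) \<in> borel_measurable (lborel \<Otimes>\<^sub>M M)"
    using Lf_meas_pair'[of n] by (simp add: split_beta')
  from sigma_finite_measure.borel_measurable_lebesgue_integral[OF sfM this]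
  show ?thesis by (simp add: Ff_def)
qed

lemma final_integral: "(LINT t:{0..2*pi}|lborel. lyapunov M \<tau> C (cis t)) = 2 * pi * I"
proof -
  define u where "u = (\<lambda>m t. indicat_real {0..2*pi} t * (Ff (Suc m) t / real (Suc m)))"
  define g where "g = (\<lambda>t. indicat_real {0..2*pi} t * lyapunov M \<tau> C (cis t))"
  have conv: "(\<lambda>m. u m t) \<longlonglongrightarrow> g t" for t
  proof -
    have "(\<lambda>m. Ff (Suc m) t / real (Suc m)) \<longlonglongrightarrow> lyapunov M \<tau> C (cis t)"
      using LIMSEQ_Suc[OF Ff_tendsto[of t]] by simp
    thus ?thesis unfolding u_def g_def by (intro tendsto_mult_left)
  qed
  have um: "u m \<in> borel_measurable lborel" for m
    unfolding u_def using Ff_meas[of "Suc m"] by measurable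
  have gm: "g \<in> borel_measurable lborel"
    by (rule borel_measurable_LIMSEQ_real[OF conv um])
  have wi: "integrable lborel (\<lambda>t. indicat_real {0..2*pi} t *\<^sub>R (ln 4 + I))"
    using set_int_const[of "ln 4 + I"] by (simp add: set_integrable_def)
  have bound: "norm (u m t) \<le> indicat_real {0..2*pi} t *\<^sub>R (ln 4 + I)" for m t
  proof -
    have "Ff (Suc m) t / real (Suc m) \<le> ln 4 + I"
      using Ff_upper[of "Suc m" t] by (simp add: field_simps)
    moreover have "0 \<le> Ff (Suc m) t / real (Suc m)" using Ff_nonneg by simp
    ultimately show ?thesis unfolding u_def by (auto simp: indicator_def)
  qed
  have lim1: "(\<lambda>m. LINT t|lborel. u m t) \<longlonglongrightarrow> (LINT t|lborel. g t)"
  proof (rule integral_dominated_convergence[OF gm um wi])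
    show "AE x in lborel. (\<lambda>i. u i x) \<longlonglongrightarrow> g x" by (simp add: conv)
    fix m show "AE x in lborel. norm (u m x) \<le> indicat_real {0..2*pi} x *\<^sub>R (ln 4 + I)"
      by (intro AE_I2 bound)
  qed
  have eq: "(LINT t|lborel. u m t) = (LINT t:{0..2*pi}|lborel. Ff (Suc m) t) / real (Suc m)" for m
  proof -
    have "(LINT t|lborel. u m t) = (LINT t|lborel. indicat_real {0..2*pi} t * Ff (Suc m) t / real (Suc m))"
      unfolding u_def by simp
    also have "\<dots> = (LINT t|lborel. indicat_real {0..2*pi} t * Ff (Suc m) t) / real (Suc m)"
      by (rule integral_divide_zero)
    finally show ?thesis by (simp add: set_lebesgue_integral_def)
  qed
  have lo: "2 * pi * I \<le> (LINT t|lborel. u m t)" for m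
    using fubini_bounds(1)[of "Suc m"] unfolding eq by (simp add: field_simps)
  have hi: "(LINT t|lborel. u m t) \<le> 2 * pi * ln 4 / real (Suc m) + 2 * pi * I" for m
  proof -
    define c where "c = real (Suc m)"
    have c0: "c > 0" by (simp add: c_def)
    have "(LINT t:{0..2*pi}|lborel. Ff (Suc m) t) / c \<le> (2 * pi * (ln 4 + c * I)) / c"
      using fubini_bounds(2)[of "Suc m"] c0 by (intro divide_right_mono) (auto simp: c_def)
    also have "\<dots> = 2 * pi * ln 4 / c + 2 * pi * I" using c0 by (simp add: field_simps)
    finally show ?thesis unfolding eq c_def .
  qed
  have "(\<lambda>m. 2 * pi * ln 4 / real (Suc m)) \<longlonglongrightarrow> 0"
    using LIMSEQ_Suc[OF lim_const_over_n[of "2 * pi * ln 4"]] by simp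
  hence "(\<lambda>m. 2 * pi * ln 4 / real (Suc m) + 2 * pi * I) \<longlonglongrightarrow> 0 + 2 * pi * I"
    by (intro tendsto_add tendsto_const)
  hence limh: "(\<lambda>m. 2 * pi * ln 4 / real (Suc m) + 2 * pi * I) \<longlonglongrightarrow> 2 * pi * I" by simp
  have e1: "\<forall>\<^sub>F m in sequentially. 2 * pi * I \<le> (LINT t|lborel. u m t)"
    by (rule always_eventually) (intro allI lo)
  have e2: "\<forall>\<^sub>F m in sequentially. (LINT t|lborel. u m t) \<le> 2 * pi * ln 4 / real (Suc m) + 2 * pi * I"
    by (rule always_eventually) (intro allI hi)
  have lim2: "(\<lambda>m. LINT t|lborel. u m t) \<longlonglongrightarrow> 2 * pi * I"
    by (rule tendsto_sandwich[OF e1 e2 tendsto_const limh])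
  have "(LINT t|lborel. g t) = 2 * pi * I" using LIMSEQ_unique[OF lim1 lim2] .
  thus ?thesis by (simp add: g_def set_lebesgue_integral_def)
qed

lemma main_result:
  "(1 / (2 * pi)) * (LINT t:{0..2*pi}|lborel. lyapunov M \<tau> C (cis t))
           = (\<integral>\<omega>. ln (1 / cmod (ca (C \<omega>))) \<partial>M)"
  unfolding final_integral by (simp add: I_def s_def)

end

theorem mainTheorem3:
  fixes M :: "'a measure" and \<tau> :: "'a \<Rightarrow> 'a" and C :: "'a \<Rightarrow> complex^2^2"
  assumes erg: "ergodic_system M \<tau>"
    and meas: "C \<in> borel_measurable M"
    and unit: "\<forall>\<omega>\<in>space M. unitary2 (C \<omega>)"
    and a_nz: "AE \<omega> in M. ca (C \<omega>) \<noteq> 0"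
    and fin: "(\<integral>\<^sup>+\<omega>. ennreal (ln (1 / cmod (ca (C \<omega>)))) \<partial>M) < \<infinity>"
  shows "(1 / (2 * pi)) * (LINT t:{0..2*pi}|lborel. lyapunov M \<tau> C (cis t))
           = (\<integral>\<omega>. ln (1 / cmod (ca (C \<omega>))) \<partial>M)"
  by (rule main_result[OF assms])

end
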